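(* Let $m\ge2$ and let $C=\mathrm{diag}(c_1,\dots,c_m)$ be a real diagonal matrix. Let $\mathcal S_m$, $\mathcal D_m$, $\mu$, $\dot P_m$ and the quantum SLD Fisher metric $\langle\cdot,\cdot\rangle$ be as in the context. Let $\Lambda(w)=-\frac12 w^TCw$ on $\mathcal S_m$, with gradient (with respect to the metric $u^Tu'$ on $T_w\mathcal S_m=\{u: w^Tu=0\}$) $\mathrm{grad}\,\Lambda(w)=-Cw+(w^TCw)w$, and let $\mu_\ast\mathrm{grad}\,\Lambda$ be the vector field on $\mathcal D_m$ defined by $\mu_\ast\mathrm{grad}\,\Lambda(\mu(w))=\mu_{\ast,w}(\mathrm{grad}\,\Lambda(w))$ for $w\in\mathcal S_m$. Let $L$ be a smooth function on $\dot P_m$ and $\mathrm{grad}\,L$ its gradient with respect to the quantum SLD Fisher metric. If $L(\mu(w))=4\Lambda(w)$ for all $w\in\mathcal S_m$, then for every $\Theta\in\mathcal D_m$ and every $Z\in T_\Theta\mathcal D_m$, $$\langle \mathrm{grad}\,L(\Theta),Z\rangle_\Theta=\langle\mu_\ast\mathrm{grad}\,\Lambda(\Theta),Z\rangle_\Theta.$$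
   Context: $\mathcal S_m=\{w\in\mathbf R^m:\|w\|=1,\ w_k\ne0\ \forall k\}$; $\mathcal D_m=\{\mathrm{diag}(\theta_1,\dots,\theta_m):\sum\theta_k=1,\theta_k>0\}$ with $T_\Theta\mathcal D_m$ the traceless real diagonal matrices; $\mu(w)=\mathrm{diag}(w_1^2,\dots,w_m^2)$ with differential $\mu_{\ast,w}(u)=2\,\mathrm{diag}(w_1u_1,\dots,w_mu_m)$. (The vector field $\mu_\ast\mathrm{grad}\,\Lambda$ is well defined since $\mathrm{grad}\,\Lambda$ is equivariant under sign changes of coordinates and $\mu$ is invariant under them.) $\dot P_m$ is the set of $m\times m$ complex Hermitian positive definite trace-one matrices, $T_\rho\dot P_m$ the Hermitian traceless matrices. The SLD $\mathcal L_\rho(\Xi)$ is the Hermitian solution of $\frac12(\rho\mathcal L_\rho(\Xi)+\mathcal L_\rho(\Xi)\rho)=\Xi$, and the quantum SLD Fisher metric is $\langle\Xi,\Xi'\rangle_\rho=\frac12\mathrm{tr}[\rho(\mathcal L_\rho(\Xi)\mathcal L_\rho(\Xi')+\mathcal L_\rho(\Xi')\mathcal L_\rho(\Xi))]$. The gradient $\mathrm{grad}\,L(\rho)\in T_\rho\dot P_m$ is defined by $\langle\mathrm{grad}\,L(\rho),\Xi\rangle_\rho=\frac{d}{d\tau}\big|_{\tau=0}L(r(\tau))$ for every smooth curve $r$ in $\dot P_m$ with $r(0)=\rho$, $r'(0)=\Xi$. *)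

theory Defs
  imports "HOL-Analysis.Analysis"
begin

type_synonym 'n cmat = "complex^'n^'n"

text \<open>C-infinity on a set S: there is a family of iterated directional derivatives
  D vs (D [] = f), each Frechet differentiable on S with derivative v mapsto D (v # vs).\<close>
definition smooth_on :: "'a::real_normed_vector set \<Rightarrow> ('a \<Rightarrow> 'b::real_normed_vector) \<Rightarrow> bool" where
  "smooth_on S f \<longleftrightarrow> (\<exists>D :: 'a list \<Rightarrow> 'a \<Rightarrow> 'b.
      (\<forall>x\<in>S. D [] x = f x) \<and>
      (\<forall>vs. \<forall>x\<in>S. (D vs has_derivative (\<lambda>v. D (v # vs) x)) (at x)))"

definition mtrace :: "'n::finite cmat \<Rightarrow> complex" where
  "mtrace A = (\<Sum>i\<in>UNIV. A$i$i)"

definition hermitian :: "'n::finite cmat \<Rightarrow> bool" where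
  "hermitian A \<longleftrightarrow> (\<forall>i j. A$i$j = cnj (A$j$i))"

definition posdef :: "'n::finite cmat \<Rightarrow> bool" where
  "posdef A \<longleftrightarrow> (\<forall>x::complex^'n. x \<noteq> 0 \<longrightarrow> Re (\<Sum>i\<in>UNIV. cnj (x$i) * (A *v x)$i) > 0)"

definition Pdot :: "'n::finite cmat set" where
  "Pdot = {\<rho>. hermitian \<rho> \<and> posdef \<rho> \<and> mtrace \<rho> = 1}"

definition TPdot :: "'n::finite cmat set" where
  "TPdot = {X. hermitian X \<and> mtrace X = 0}"

definition sld :: "'n::finite cmat \<Rightarrow> 'n cmat \<Rightarrow> 'n cmat" where
  "sld \<rho> \<Xi> = (THE X. hermitian X \<and> (1/2) *\<^sub>R (\<rho> ** X + X ** \<rho>) = \<Xi>)"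

text \<open>Quantum SLD Fisher metric (its value is real; we take the real part).\<close>
definition sld_inner :: "'n::finite cmat \<Rightarrow> 'n cmat \<Rightarrow> 'n cmat \<Rightarrow> real" where
  "sld_inner \<rho> X Y = Re (mtrace ((1/2) *\<^sub>R (\<rho> ** (sld \<rho> X ** sld \<rho> Y + sld \<rho> Y ** sld \<rho> X))))"

definition sld_grad :: "('n::finite cmat \<Rightarrow> real) \<Rightarrow> 'n cmat \<Rightarrow> 'n cmat" where
  "sld_grad L \<rho> = (THE G. G \<in> TPdot \<and>
     (\<forall>(r :: real \<Rightarrow> 'n cmat) \<Xi> e. e > 0 \<and> smooth_on {-e<..<e} r \<and> r ` {-e<..<e} \<subseteq> Pdot
        \<and> r 0 = \<rho> \<and> (r has_vector_derivative \<Xi>) (at 0)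
        \<longrightarrow> ((\<lambda>\<tau>. L (r \<tau>)) has_real_derivative sld_inner \<rho> G \<Xi>) (at 0)))"

definition diagc :: "real^'n::finite \<Rightarrow> 'n cmat" where
  "diagc z = (\<chi> i j. if i = j then complex_of_real (z$i) else 0)"

definition Sm :: "(real^'n::finite) set" where
  "Sm = {w. norm w = 1 \<and> (\<forall>k. w$k \<noteq> 0)}"

definition Dm :: "'n::finite cmat set" where
  "Dm = {diagc \<theta> | \<theta>. (\<forall>k. \<theta>$k > 0) \<and> sum (\<lambda>k. \<theta>$k) UNIV = 1}"

definition TDm :: "'n::finite cmat set" where
  "TDm = {diagc z | z. sum (\<lambda>k. z$k) UNIV = 0}"

definition mu :: "real^'n::finite \<Rightarrow> 'n cmat" where
  "mu w = diagc (\<chi> k. (w$k)^2)"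

definition mu_push :: "real^'n::finite \<Rightarrow> real^'n \<Rightarrow> 'n cmat" where
  "mu_push w u = diagc (\<chi> k. 2 * w$k * u$k)"

definition Lambda :: "real^'n::finite \<Rightarrow> real^'n \<Rightarrow> real" where
  "Lambda c w = - (1/2) * (\<Sum>k\<in>UNIV. c$k * (w$k)^2)"

definition grad_Lambda :: "real^'n::finite \<Rightarrow> real^'n \<Rightarrow> real^'n" where
  "grad_Lambda c w = - (\<chi> k. c$k * w$k) + (\<Sum>k\<in>UNIV. c$k * (w$k)^2) *\<^sub>R w"

text \<open>The pushed-forward vector field on Dm: evaluated at Theta = mu w using the
  preimage w with positive entries (well defined by sign-equivariance).\<close>
definition mu_grad_Lambda :: "real^'n::finite \<Rightarrow> 'n cmat \<Rightarrow> 'n cmat" where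
  "mu_grad_Lambda c \<Theta> = (let w = (\<chi> k. sqrt (Re (\<Theta>$k$k))) in mu_push w (grad_Lambda c w))"

end

theory Submission imports Defs begin

lemma if_mult0: "(if P then a else 0) * (b::complex) = (if P then a * b else 0)" by simp
lemma if_mult0': "(b::complex) * (if P then a else 0) = (if P then b * a else 0)" by simp

lemma diagc_mult_left: "(diagc t ** Y)$i$j = complex_of_real (t$i) * Y$i$j"
proof -
  have "(diagc t ** Y)$i$j = (\<Sum>k\<in>UNIV. if i = k then complex_of_real (t$i) * Y$k$j else 0)"
    unfolding diagc_def matrix_matrix_mult_def by (simp add: if_mult0)
  then show ?thesis by simp
qed
lemma diagc_mult_right: "(Y ** diagc t)$i$j = Y$i$j * complex_of_real (t$j)"
  by (simp add: diagc_def matrix_matrix_mult_def if_distrib sum.delta' cong: if_cong)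

definition sldd :: "real^'n::finite \<Rightarrow> 'n cmat \<Rightarrow> 'n cmat" where
  "sldd t X = (\<chi> i j. 2 * X$i$j / complex_of_real (t$i + t$j))"

lemma sld_diag:
  assumes pos: "\<forall>k. t$k > 0" and h: "hermitian X"
  shows "sld (diagc t) X = sldd t X"
  unfolding sld_def
proof (rule the_equality)
  show "hermitian (sldd t X) \<and> (1/2) *\<^sub>R (diagc t ** sldd t X + sldd t X ** diagc t) = X"
  proof
    show "hermitian (sldd t X)" unfolding hermitian_def
    proof (intro allI)
      fix i j
      have "X$i$j = cnj (X$j$i)" using h unfolding hermitian_def by blast
      then show "sldd t X $ i $ j = cnj (sldd t X $ j $ i)" by (simp add: sldd_def add.commute)
    qed
    show "(1/2) *\<^sub>R (diagc t ** sldd t X + sldd t X ** diagc t) = X"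
    proof (simp add: vec_eq_iff diagc_mult_left diagc_mult_right, intro allI)
      fix i j
      have "t$i + t$j > 0" using pos by (simp add: add_pos_pos)
      then have nz: "complex_of_real (t$i + t$j) \<noteq> 0" by (metis of_real_eq_0_iff order_less_irrefl)
      have "complex_of_real (t$i) * sldd t X $ i $ j + sldd t X $ i $ j * complex_of_real (t$j)
          = complex_of_real (t$i + t$j) * sldd t X $ i $ j" by (simp add: algebra_simps)
      also have "\<dots> = 2 * X$i$j" using nz by (simp add: sldd_def)
      finally show "(1/2) *\<^sub>R (complex_of_real (t$i) * sldd t X $ i $ j + sldd t X $ i $ j * complex_of_real (t$j)) = X$i$j"
        by (simp add: scaleR_conv_of_real)
    qed
  qed
next
  fix Y assume a: "hermitian Y \<and> (1/2) *\<^sub>R (diagc t ** Y + Y ** diagc t) = X"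
  show "Y = sldd t X"
  proof (simp add: vec_eq_iff, intro allI)
    fix i j
    have "t$i + t$j > 0" using pos by (simp add: add_pos_pos)
    then have nz: "complex_of_real (t$i + t$j) \<noteq> 0" by (metis of_real_eq_0_iff order_less_irrefl)
    from a have "((1/2) *\<^sub>R (diagc t ** Y + Y ** diagc t))$i$j = X$i$j" by simp
    then have "(1/2) *\<^sub>R (complex_of_real (t$i) * Y$i$j + Y$i$j * complex_of_real (t$j)) = X$i$j"
      by (simp add: diagc_mult_left diagc_mult_right)
    then have "complex_of_real (t$i + t$j) * Y$i$j = 2 * X$i$j" by (simp add: scaleR_conv_of_real algebra_simps) (metis add_divide_distrib nonzero_eq_divide_eq zero_neq_numeral mult.commute)
    then show "Y$i$j = sldd t X $i$j" using nz by (simp add: sldd_def field_simps)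
  qed
qed

lemma mtrace_scaleR: "mtrace (c *\<^sub>R M) = c *\<^sub>R mtrace M"
  by (simp add: mtrace_def scaleR_sum_right)

lemma Re_mul_cnj: "Re (x * cnj y) = x \<bullet> y"
  by (simp add: inner_complex_def)

lemma aux_s: "(s::complex) \<noteq> 0 \<Longrightarrow> s * (2*x/s * (2*y/s)) = 4*(x*y)/s"
  by (simp add: field_simps)

lemma aux_r: "(4*p + 4*q)/(2*x+2*y) = (2*p+2*q)/(x+(y::real))"
proof -
  have "(4*p + 4*q)/(2*x+2*y) = (2*(2*p+2*q))/(2*(x+y))" by (intro arg_cong2[where f="(/)"]) (simp_all add: algebra_simps)
  then show ?thesis by (subst (asm) mult_divide_mult_cancel_left) simp_all
qed

lemma sld_inner_diag:
  assumes pos: "\<forall>k. t$k > 0" and hX: "hermitian X" and hY: "hermitian Y"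
  shows "sld_inner (diagc t) X Y = (\<Sum>i\<in>UNIV. \<Sum>j\<in>UNIV. 2 * (X$i$j \<bullet> Y$i$j) / (t$i + t$j))"
proof -
  define A where "A = sldd t X"
  define B where "B = sldd t Y"
  let ?r = "\<lambda>i j. complex_of_real (t$i)"
  have tr: "mtrace (diagc t ** (A ** B + B ** A)) =
     (\<Sum>i\<in>UNIV. \<Sum>j\<in>UNIV. complex_of_real (t$i) * (A$i$j * B$j$i)) +
     (\<Sum>i\<in>UNIV. \<Sum>j\<in>UNIV. complex_of_real (t$i) * (B$i$j * A$j$i))"
    unfolding mtrace_def diagc_mult_left
    by (simp add: matrix_matrix_mult_def sum_distrib_left sum.distrib distrib_left)
  have sw: "(\<Sum>i\<in>UNIV. \<Sum>j\<in>UNIV. complex_of_real (t$i) * (B$i$j * A$j$i)) =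
     (\<Sum>i\<in>UNIV. \<Sum>j\<in>UNIV. complex_of_real (t$j) * (A$i$j * B$j$i))"
    by (subst sum.swap) (simp add: mult.commute)
  have trm: "complex_of_real (t$i) * (A$i$j * B$j$i) + complex_of_real (t$j) * (A$i$j * B$j$i)
      = 4 * (X$i$j * cnj (Y$i$j)) / complex_of_real (t$i + t$j)" for i j
  proof -
    have "t$i + t$j > 0" using pos by (simp add: add_pos_pos)
    then have nz: "complex_of_real (t$i + t$j) \<noteq> 0" by (metis of_real_eq_0_iff order_less_irrefl)
    have yj: "Y$j$i = cnj (Y$i$j)" using hY unfolding hermitian_def by blast
    have "complex_of_real (t$i) * (A$i$j * B$j$i) + complex_of_real (t$j) * (A$i$j * B$j$i)
       = complex_of_real (t$i + t$j) * (A$i$j * B$j$i)" by (simp add: algebra_simps)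
    also have "\<dots> = complex_of_real (t$i + t$j) * (2 * X$i$j / complex_of_real (t$i + t$j) * (2 * cnj (Y$i$j) / complex_of_real (t$i + t$j)))"
      by (simp add: A_def B_def sldd_def yj add.commute)
    also have "\<dots> = 4 * (X$i$j * cnj (Y$i$j)) / complex_of_real (t$i + t$j)"
      using nz by (rule aux_s)
    finally show ?thesis .
  qed
  have "mtrace (diagc t ** (A ** B + B ** A)) =
     (\<Sum>i\<in>UNIV. \<Sum>j\<in>UNIV. 4 * (X$i$j * cnj (Y$i$j)) / complex_of_real (t$i + t$j))"
    unfolding tr sw by (simp add: sum.distrib[symmetric] trm)
  then have "sld_inner (diagc t) X Y = (1/2) * Re (\<Sum>i\<in>UNIV. \<Sum>j\<in>UNIV. 4 * (X$i$j * cnj (Y$i$j)) / complex_of_real (t$i + t$j))"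
    unfolding sld_inner_def sld_diag[OF pos hX] sld_diag[OF pos hY] A_def B_def
    by (simp add: mtrace_scaleR)
  also have "\<dots> = (\<Sum>i\<in>UNIV. \<Sum>j\<in>UNIV. 2 * (X$i$j \<bullet> Y$i$j) / (t$i + t$j))"
    by (simp add: Re_sum sum_distrib_left Re_divide_of_real Re_mul_cnj[symmetric] inner_complex_def aux_r)
  finally show ?thesis .
qed

lemma hermitian_diagc: "hermitian (diagc x)"
  by (simp add: hermitian_def diagc_def)

lemma sld_inner_diagc:
  assumes pos: "\<forall>k. t$k > 0"
  shows "sld_inner (diagc t) (diagc x) (diagc y) = (\<Sum>i\<in>UNIV. x$i * y$i / t$i)"
proof -
  have "sld_inner (diagc t) (diagc x) (diagc y) =
      (\<Sum>i\<in>UNIV. \<Sum>j\<in>UNIV. if i = j then x$i * y$i / t$i else 0)"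
    unfolding sld_inner_diag[OF pos hermitian_diagc hermitian_diagc]
    by (intro sum.cong refl) (auto simp: diagc_def inner_complex_def)
  then show ?thesis by simp
qed


lemma weighted_zero:
  assumes pos: "\<forall>k. t$k > 0"
    and z: "(\<Sum>i\<in>UNIV. \<Sum>j\<in>UNIV. 2 * (A$i$j \<bullet> A$i$j) / (t$i + t$j)) = (0::real)"
  shows "A = (0::'n::finite cmat)"
proof -
  have tp: "t$i + t$j > 0" for i j using pos by (simp add: add_pos_pos)
  have nn: "0 \<le> 2 * (A$i$j \<bullet> A$i$j) / (t$i + t$j)" for i j
    using tp[of i j] by simp
  have nn2: "0 \<le> (\<Sum>j\<in>UNIV. 2 * (A$i$j \<bullet> A$i$j) / (t$i + t$j))" for i
    by (rule sum_nonneg) (rule nn)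
  have "(\<Sum>j\<in>UNIV. 2 * (A$i$j \<bullet> A$i$j) / (t$i + t$j)) = 0" for i
    using z sum_nonneg_eq_0_iff[of UNIV "\<lambda>i. \<Sum>j\<in>UNIV. 2 * (A$i$j \<bullet> A$i$j) / (t$i + t$j)"] nn2 finite_class.finite_UNIV
    by blast
  then have h2: "2 * (A$i$j \<bullet> A$i$j) / (t$i + t$j) = 0" for i j
    using sum_nonneg_eq_0_iff[of UNIV "\<lambda>j. 2 * (A$i$j \<bullet> A$i$j) / (t$i + t$j)"] nn finite_class.finite_UNIV
    by blast
  have "A$i$j = 0" for i j using h2[of i j] tp[of i j] by simp
  then show ?thesis by (simp add: vec_eq_iff)
qed

lemma hermitian_diff: "hermitian A \<Longrightarrow> hermitian B \<Longrightarrow> hermitian (A - B)"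
  unfolding hermitian_def by (metis complex_cnj_diff vector_minus_component)

lemma sld_inner_diff_left:
  assumes pos: "\<forall>k. t$k > 0" and hA: "hermitian A" and hB: "hermitian B" and hX: "hermitian X"
  shows "sld_inner (diagc t) A X - sld_inner (diagc t) B X = sld_inner (diagc t) (A - B) X"
proof -
  have e: "2 * (A$i$j \<bullet> X$i$j) / (t$i + t$j) - 2 * (B$i$j \<bullet> X$i$j) / (t$i + t$j)
      = 2 * ((A - B)$i$j \<bullet> X$i$j) / (t$i + t$j)" for i j
    by (simp add: inner_diff_left diff_divide_distrib[symmetric] right_diff_distrib)
  show ?thesis
    unfolding sld_inner_diag[OF pos hA hX] sld_inner_diag[OF pos hB hX]
      sld_inner_diag[OF pos hermitian_diff[OF hA hB] hX]
    by (simp add: sum_subtractf[symmetric] e)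
qed

definition herm_defect :: "'n::finite cmat \<Rightarrow> 'n cmat" where
  "herm_defect M = (\<chi> i j. M$i$j - cnj (M$j$i))"

lemma bl_herm_defect: "bounded_linear (herm_defect :: 'n::finite cmat \<Rightarrow> 'n cmat)"
proof -
  have "linear (herm_defect :: 'n::finite cmat \<Rightarrow> 'n cmat)"
    by (rule linearI) (simp_all add: herm_defect_def vec_eq_iff complex_cnj_scaleR scaleR_diff_right)
  then show ?thesis by (simp add: linear_conv_bounded_linear)
qed

lemma bl_mtrace: "bounded_linear (mtrace :: 'n::finite cmat \<Rightarrow> complex)"
proof -
  have "linear (mtrace :: 'n::finite cmat \<Rightarrow> complex)"
    by (rule linearI) (simp_all add: mtrace_def sum.distrib scaleR_sum_right)
  then show ?thesis by (simp add: linear_conv_bounded_linear)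
qed

lemma herm_defect_zero: "herm_defect M = 0 \<longleftrightarrow> hermitian M"
  by (simp add: herm_defect_def hermitian_def vec_eq_iff)

lemma curve_tangent:
  assumes e: "e > 0" and sub: "r ` {-e<..<e} \<subseteq> Pdot" and d: "(r has_vector_derivative \<Xi>) (at 0)"
  shows "hermitian \<Xi> \<and> mtrace \<Xi> = 0"
proof
  have d1: "((\<lambda>\<tau>. herm_defect (r \<tau>)) has_vector_derivative herm_defect \<Xi>) (at 0)"
    by (rule bounded_linear.has_vector_derivative[OF bl_herm_defect d])
  have d2: "((\<lambda>\<tau>. herm_defect (r \<tau>)) has_vector_derivative 0) (at 0)"
  proof (rule has_vector_derivative_transform_within_open[where S="{-e<..<e}"])
    show "((\<lambda>\<tau>. 0) has_vector_derivative 0) (at 0)" by (rule has_vector_derivative_const)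
    show "open {-e<..<e}" by simp
    show "(0::real) \<in> {-e<..<e}" using e by simp
    fix y assume "y \<in> {-e<..<e}"
    then have "r y \<in> Pdot" using sub by blast
    then show "0 = herm_defect (r y)" by (simp add: Pdot_def herm_defect_zero)
  qed
  from vector_derivative_unique_at[OF d1 d2] show "hermitian \<Xi>"
    by (simp add: herm_defect_zero)
  have d3: "((\<lambda>\<tau>. mtrace (r \<tau>)) has_vector_derivative mtrace \<Xi>) (at 0)"
    by (rule bounded_linear.has_vector_derivative[OF bl_mtrace d])
  have d4: "((\<lambda>\<tau>. mtrace (r \<tau>)) has_vector_derivative 0) (at 0)"
  proof (rule has_vector_derivative_transform_within_open[where S="{-e<..<e}"])
    show "((\<lambda>\<tau>. 1) has_vector_derivative 0) (at 0)" by (rule has_vector_derivative_const)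
    show "open {-e<..<e}" by simp
    show "(0::real) \<in> {-e<..<e}" using e by simp
    fix y assume "y \<in> {-e<..<e}"
    then have "r y \<in> Pdot" using sub by blast
    then show "1 = mtrace (r y)" by (simp add: Pdot_def)
  qed
  from vector_derivative_unique_at[OF d3 d4] show "mtrace \<Xi> = 0" .
qed

lemma prod_le_N:
  fixes x :: "complex^'n::finite"
  shows "cmod (x$i) * cmod (x$j) \<le> (\<Sum>k\<in>UNIV. (cmod (x$k))^2)"
proof -
  have a: "(cmod (x$i))^2 \<le> (\<Sum>k\<in>UNIV. (cmod (x$k))^2)"
    by (rule member_le_sum) auto
  have b: "(cmod (x$j))^2 \<le> (\<Sum>k\<in>UNIV. (cmod (x$k))^2)"
    by (rule member_le_sum) auto
  have "2 * (cmod (x$i) * cmod (x$j)) \<le> (cmod (x$i))^2 + (cmod (x$j))^2"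
    using sum_squares_bound[of "cmod (x$i)" "cmod (x$j)"] by (simp add: power2_eq_square)
  then show ?thesis using a b by linarith
qed

lemma N_pos:
  fixes x :: "complex^'n::finite"
  assumes "x \<noteq> 0"
  shows "0 < (\<Sum>k\<in>UNIV. (cmod (x$k))^2)"
proof -
  obtain k where k: "x$k \<noteq> 0" using assms by (auto simp: vec_eq_iff)
  have "0 < (cmod (x$k))^2" using k by simp
  also have "\<dots> \<le> (\<Sum>k\<in>UNIV. (cmod (x$k))^2)" by (rule member_le_sum) auto
  finally show ?thesis .
qed

lemma posdef_perturb:
  fixes t :: "real^'n::finite" and X :: "'n cmat"
  assumes pos: "\<forall>k. t$k > 0"
  shows "\<exists>e>0. \<forall>\<tau>. \<bar>\<tau>\<bar> < e \<longrightarrow> posdef (diagc t + \<tau> *\<^sub>R X)"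
proof -
  define m where "m = Min (range (\<lambda>k. t$k))"
  have mle: "m \<le> t$k" for k unfolding m_def by (rule Min_le) auto
  have "m \<in> range (\<lambda>k. t$k)" unfolding m_def by (rule Min_in) auto
  then have mpos: "m > 0" using pos by auto
  define K where "K = (\<Sum>i\<in>UNIV. \<Sum>j\<in>UNIV. cmod (X$i$j))"
  have K0: "K \<ge> 0" unfolding K_def by (intro sum_nonneg) auto
  define e where "e = m / (K + 1)"
  have epos: "e > 0" using mpos K0 by (simp add: e_def)
  have eK: "e * K < m"
  proof -
    have "e * K = m * K / (K + 1)" by (simp add: e_def)
    also have "\<dots> < m" using mpos K0 by (simp add: divide_less_eq)
    finally show ?thesis .
  qed
  show ?thesis
  proof (intro exI conjI allI impI)
    show "e > 0" by (rule epos)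
    fix \<tau> :: real assume tau: "\<bar>\<tau>\<bar> < e"
    show "posdef (diagc t + \<tau> *\<^sub>R X)"
      unfolding posdef_def
    proof (intro allI impI)
      fix x :: "complex^'n" assume x0: "x \<noteq> 0"
      define N where "N = (\<Sum>k\<in>UNIV. (cmod (x$k))^2)"
      have Npos: "N > 0" unfolding N_def by (rule N_pos[OF x0])
      define B where "B = (\<Sum>i\<in>UNIV. \<Sum>j\<in>UNIV. cnj (x$i) * (X$i$j * x$j))"
      have mv: "((diagc t + \<tau> *\<^sub>R X) *v x)$i = complex_of_real (t$i) * x$i + complex_of_real \<tau> * (\<Sum>j\<in>UNIV. X$i$j * x$j)" for i
      proof -
        have "((diagc t + \<tau> *\<^sub>R X) *v x)$i = (\<Sum>j\<in>UNIV. (if i = j then complex_of_real (t$i) * x$j else 0) + complex_of_real \<tau> * (X$i$j * x$j))"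
          unfolding matrix_vector_mult_def diagc_def vector_add_component vector_scaleR_component
          by (simp add: distrib_right scaleR_conv_of_real if_mult0 mult.assoc)
        also have "\<dots> = complex_of_real (t$i) * x$i + complex_of_real \<tau> * (\<Sum>j\<in>UNIV. X$i$j * x$j)"
          by (simp add: sum.distrib sum_distrib_left)
        finally show ?thesis .
      qed
      have Q: "(\<Sum>i\<in>UNIV. cnj (x$i) * ((diagc t + \<tau> *\<^sub>R X) *v x)$i)
          = (\<Sum>i\<in>UNIV. complex_of_real (t$i * (cmod (x$i))^2)) + complex_of_real \<tau> * B"
      proof -
        have "cnj (x$i) * ((diagc t + \<tau> *\<^sub>R X) *v x)$i
            = complex_of_real (t$i * (cmod (x$i))^2) + complex_of_real \<tau> * (\<Sum>j\<in>UNIV. cnj (x$i) * (X$i$j * x$j))" for i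
        proof -
          have nsq: "cnj (x$i) * x$i = complex_of_real ((cmod (x$i))^2)"
            by (simp only: complex_norm_square mult.commute)
          show ?thesis unfolding mv distrib_left
            by (simp add: sum_distrib_left mult.assoc mult.left_commute[of "cnj (x$i)"] nsq)
        qed
        then show ?thesis by (simp add: sum.distrib B_def sum_distrib_left)
      qed
      have ReQ: "Re (\<Sum>i\<in>UNIV. cnj (x$i) * ((diagc t + \<tau> *\<^sub>R X) *v x)$i)
          = (\<Sum>i\<in>UNIV. t$i * (cmod (x$i))^2) + \<tau> * Re B"
        unfolding Q by (simp add: Re_sum)
      have A: "m * N \<le> (\<Sum>i\<in>UNIV. t$i * (cmod (x$i))^2)"
        unfolding N_def sum_distrib_left by (intro sum_mono mult_right_mono mle) auto
      have Bb: "\<bar>Re B\<bar> \<le> K * N"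
      proof -
        have "\<bar>Re B\<bar> \<le> cmod B" by (rule abs_Re_le_cmod)
        also have "\<dots> \<le> (\<Sum>i\<in>UNIV. \<Sum>j\<in>UNIV. cmod (cnj (x$i) * (X$i$j * x$j)))"
          unfolding B_def by (rule order_trans[OF norm_sum sum_mono]) (rule norm_sum)
        also have "\<dots> \<le> (\<Sum>i\<in>UNIV. \<Sum>j\<in>UNIV. cmod (X$i$j) * N)"
        proof (intro sum_mono)
          fix i j
          have "cmod (cnj (x$i) * (X$i$j * x$j)) = cmod (X$i$j) * (cmod (x$i) * cmod (x$j))"
            by (simp add: norm_mult)
          also have "\<dots> \<le> cmod (X$i$j) * N" unfolding N_def
            by (rule mult_left_mono[OF prod_le_N]) simp
          finally show "cmod (cnj (x$i) * (X$i$j * x$j)) \<le> cmod (X$i$j) * N" .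
        qed
        also have "\<dots> = K * N" by (simp add: K_def sum_distrib_right)
        finally show ?thesis .
      qed
      have "\<bar>\<tau> * Re B\<bar> \<le> e * (K * N)"
        unfolding abs_mult using tau Bb by (intro mult_mono) auto
      also have "\<dots> < m * N" using eK Npos by (simp add: mult.assoc[symmetric])
      finally have "\<bar>\<tau> * Re B\<bar> < m * N" .
      then show "Re (\<Sum>i\<in>UNIV. cnj (x$i) * ((diagc t + \<tau> *\<^sub>R X) *v x)$i) > 0"
        unfolding ReQ using A by linarith
    qed
  qed
qed

lemma smooth_line: "smooth_on S (\<lambda>\<tau>::real. A + \<tau> *\<^sub>R (X::'a::real_normed_vector))"
  unfolding smooth_on_def
proof (intro exI conjI ballI allI)
  define D :: "real list \<Rightarrow> real \<Rightarrow> 'a" where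
    "D = (\<lambda>vs. case vs of [] \<Rightarrow> (\<lambda>\<tau>. A + \<tau> *\<^sub>R X) | [v] \<Rightarrow> (\<lambda>_. v *\<^sub>R X) | _ \<Rightarrow> (\<lambda>_. 0))"
  fix x show "D [] x = A + x *\<^sub>R X" by (simp add: D_def)
next
  define D :: "real list \<Rightarrow> real \<Rightarrow> 'a" where
    "D = (\<lambda>vs. case vs of [] \<Rightarrow> (\<lambda>\<tau>. A + \<tau> *\<^sub>R X) | [v] \<Rightarrow> (\<lambda>_. v *\<^sub>R X) | _ \<Rightarrow> (\<lambda>_. 0))"
  fix vs :: "real list" and x :: real
  show "(D vs has_derivative (\<lambda>v. D (v # vs) x)) (at x)"
  proof (cases vs)
    case Nil
    then show ?thesis by (auto simp: D_def intro!: derivative_eq_intros)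
  next
    case (Cons a vs')
    then show ?thesis by (cases vs') (auto simp: D_def intro!: derivative_eq_intros)
  qed
qed

lemma hermitian_add: "hermitian A \<Longrightarrow> hermitian B \<Longrightarrow> hermitian (A + B)"
  unfolding hermitian_def by (metis complex_cnj_add vector_add_component)

lemma hermitian_scaleR: "hermitian A \<Longrightarrow> hermitian (c *\<^sub>R A)"
  unfolding hermitian_def by (metis complex_cnj_scaleR vector_scaleR_component)

lemma mtrace_diagc: "mtrace (diagc t) = complex_of_real (\<Sum>k\<in>UNIV. t$k)"
  by (simp add: mtrace_def diagc_def)

lemma mtrace_add: "mtrace (A + B) = mtrace A + mtrace B"
  by (simp add: mtrace_def sum.distrib)

lemma line_in_Pdot:
  assumes pos: "\<forall>k. t$k > 0" and s1: "(\<Sum>k\<in>UNIV. t$k) = 1" and hX: "hermitian X" and trX: "mtrace X = 0"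
  shows "\<exists>e>0. (\<lambda>\<tau>. diagc t + \<tau> *\<^sub>R X) ` {-e<..<e} \<subseteq> Pdot"
proof -
  obtain e where e: "e > 0" "\<forall>\<tau>. \<bar>\<tau>\<bar> < e \<longrightarrow> posdef (diagc t + \<tau> *\<^sub>R X)"
    using posdef_perturb[OF pos] by blast
  have "(\<lambda>\<tau>. diagc t + \<tau> *\<^sub>R X) ` {-e<..<e} \<subseteq> Pdot"
  proof
    fix M assume "M \<in> (\<lambda>\<tau>. diagc t + \<tau> *\<^sub>R X) ` {-e<..<e}"
    then obtain \<tau> where tau0: "\<tau> \<in> {-e<..<e}" and M: "M = diagc t + \<tau> *\<^sub>R X" by blast
    from tau0 have tau: "\<bar>\<tau>\<bar> < e" by auto
    have "hermitian M" unfolding M by (intro hermitian_add hermitian_diagc hermitian_scaleR hX)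
    moreover have "posdef M" using e tau M by blast
    moreover have "mtrace M = 1" unfolding M mtrace_add mtrace_scaleR mtrace_diagc s1 trX by simp
    ultimately show "M \<in> Pdot" by (simp add: Pdot_def)
  qed
  then show ?thesis using e(1) by blast
qed



lemma cnj_inner: "cnj a \<bullet> b = a \<bullet> cnj b"
  by (simp add: inner_complex_def)

lemma half_cancel: "(s::real) > 0 \<Longrightarrow> a = (s/2) * w \<Longrightarrow> 2 * a / s = w"
  by (simp add: field_simps)

lemma G_props:
  fixes t :: "real^'n::finite" and g :: "'n cmat"
  assumes pos: "\<forall>k. t$k > 0" and s1: "(\<Sum>k\<in>UNIV. t$k) = 1"
  defines "h \<equiv> (\<chi> i j. (1/2) *\<^sub>R (g$i$j + cnj (g$j$i)))"
  defines "lam \<equiv> (\<Sum>i\<in>UNIV. t$i * Re (h$i$i))"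
  defines "G \<equiv> (\<chi> i j. ((t$i + t$j)/2) *\<^sub>R (h$i$j - (if i = j then complex_of_real lam else 0)))"
  shows "hermitian G" "mtrace G = 0"
    "\<And>\<Xi>. hermitian \<Xi> \<Longrightarrow> mtrace \<Xi> = 0 \<Longrightarrow> sld_inner (diagc t) G \<Xi> = g \<bullet> \<Xi>"
proof -
  have hh: "h$i$j = cnj (h$j$i)" for i j
    by (simp add: h_def complex_cnj_scaleR add.commute)
  show "hermitian G" unfolding hermitian_def
  proof (intro allI)
    fix i j
    show "G$i$j = cnj (G$j$i)"
      using hh[of i j] by (simp add: G_def complex_cnj_scaleR add.commute)
  qed
  have hii: "h$i$i = complex_of_real (Re (h$i$i))" for i
    by (simp add: h_def complex_add_cnj scaleR_conv_of_real)
  have "mtrace G = (\<Sum>i\<in>UNIV. t$i *\<^sub>R (h$i$i - complex_of_real lam))"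
    by (simp add: mtrace_def G_def)
  also have "\<dots> = (\<Sum>i\<in>UNIV. complex_of_real (t$i * Re (h$i$i))) - complex_of_real lam * (\<Sum>i\<in>UNIV. complex_of_real (t$i))"
    by (subst hii) (simp add: scaleR_conv_of_real sum_subtractf sum_distrib_left algebra_simps)
  also have "\<dots> = 0"
  proof -
    have a: "(\<Sum>i\<in>UNIV. complex_of_real (t$i)) = 1" using s1 by (metis of_real_sum of_real_1)
    have b: "(\<Sum>i\<in>UNIV. complex_of_real (t$i * Re (h$i$i))) = complex_of_real lam"
      unfolding lam_def by (rule of_real_sum[symmetric])
    show ?thesis unfolding a b by simp
  qed
  finally show "mtrace G = 0" .
  fix \<Xi> :: "'n cmat" assume hX: "hermitian \<Xi>" and trX: "mtrace \<Xi> = 0"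
  have xx: "\<Xi>$j$i = cnj (\<Xi>$i$j)" for i j using hX unfolding hermitian_def by blast
  have tp: "t$i + t$j > 0" for i j using pos by (simp add: add_pos_pos)
  have t1: "2 * (G$i$j \<bullet> \<Xi>$i$j) / (t$i + t$j) = h$i$j \<bullet> \<Xi>$i$j - (if i = j then lam * Re (\<Xi>$i$j) else 0)" for i j
  proof -
    have "G$i$j \<bullet> \<Xi>$i$j = ((t$i + t$j)/2) * (h$i$j \<bullet> \<Xi>$i$j - (if i = j then lam * Re (\<Xi>$i$j) else 0))"
      by (simp add: G_def inner_diff_left inner_complex_def algebra_simps)
    then show ?thesis using tp[of i j] by (rule half_cancel[rotated])
  qed
  have s2: "(\<Sum>i\<in>UNIV. \<Sum>j\<in>UNIV. (if i = j then lam * Re (\<Xi>$i$j) else 0)) = lam * Re (mtrace \<Xi>)"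
    by (simp add: mtrace_def Re_sum sum_distrib_left)
  have s3: "(\<Sum>i\<in>UNIV. \<Sum>j\<in>UNIV. h$i$j \<bullet> \<Xi>$i$j) = (\<Sum>i\<in>UNIV. \<Sum>j\<in>UNIV. g$i$j \<bullet> \<Xi>$i$j)"
  proof -
    have a: "h$i$j \<bullet> \<Xi>$i$j = (1/2) * (g$i$j \<bullet> \<Xi>$i$j) + (1/2) * (g$j$i \<bullet> \<Xi>$j$i)" for i j
    proof -
      have c: "cnj (\<Xi>$i$j) = \<Xi>$j$i" using xx[of i j] by simp
      show ?thesis by (simp add: h_def inner_add_left cnj_inner c algebra_simps)
    qed
    have b: "(\<Sum>i\<in>UNIV. \<Sum>j\<in>UNIV. g$j$i \<bullet> \<Xi>$j$i) = (\<Sum>i\<in>UNIV. \<Sum>j\<in>UNIV. g$i$j \<bullet> \<Xi>$i$j)"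
      by (rule sum.swap)
    show ?thesis unfolding a sum.distrib sum_distrib_left[symmetric] b by simp
  qed
  have "sld_inner (diagc t) G \<Xi> = (\<Sum>i\<in>UNIV. \<Sum>j\<in>UNIV. h$i$j \<bullet> \<Xi>$i$j - (if i = j then lam * Re (\<Xi>$i$j) else 0))"
    unfolding sld_inner_diag[OF pos \<open>hermitian G\<close> hX] t1 ..
  also have "\<dots> = (\<Sum>i\<in>UNIV. \<Sum>j\<in>UNIV. g$i$j \<bullet> \<Xi>$i$j)"
    unfolding sum_subtractf s2 s3 trX by simp
  also have "\<dots> = g \<bullet> \<Xi>" by (simp add: inner_vec_def)
  finally show "sld_inner (diagc t) G \<Xi> = g \<bullet> \<Xi>" .
qed

lemma rhs_calc:
  assumes pos: "\<forall>k. t$k > 0" and sz: "(\<Sum>k\<in>UNIV. z$k) = 0"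
  shows "sld_inner (diagc t) (mu_grad_Lambda c (diagc t)) (diagc z) = -2 * (\<Sum>k\<in>UNIV. c$k * z$k)"
proof -
  define S where "S = (\<Sum>k\<in>UNIV. c$k * t$k)"
  have w: "(\<chi> k. sqrt (Re (diagc t $ k $ k))) = (\<chi> k. sqrt (t$k))" by (simp add: diagc_def)
  have sq: "(sqrt (t$k))^2 = t$k" for k using pos by (simp add: less_imp_le)
  have "mu_grad_Lambda c (diagc t) = diagc (\<chi> k. 2 * t$k * (S - c$k))"
    unfolding mu_grad_Lambda_def Let_def w mu_push_def grad_Lambda_def
    by (rule arg_cong[where f=diagc]) (simp add: vec_eq_iff sq S_def algebra_simps power2_eq_square[symmetric])
  then have "sld_inner (diagc t) (mu_grad_Lambda c (diagc t)) (diagc z) = (\<Sum>k\<in>UNIV. 2 * t$k * (S - c$k) * z$k / t$k)"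
    by (simp add: sld_inner_diagc[OF pos])
  also have "\<dots> = (\<Sum>k\<in>UNIV. 2 * S * z$k - 2 * (c$k * z$k))"
  proof (intro sum.cong refl)
    fix k have "t$k > 0" using pos by simp
    then show "2 * t$k * (S - c$k) * z$k / t$k = 2 * S * z$k - 2 * (c$k * z$k)" by (simp add: field_simps)
  qed
  also have "\<dots> = -2 * (\<Sum>k\<in>UNIV. c$k * z$k)"
    by (simp add: sum_subtractf sum_distrib_left[symmetric] sz)
  finally show ?thesis .
qed

lemma L_on_line:
  fixes L :: "'n::finite cmat \<Rightarrow> real"
  assumes pos: "\<forall>k. t$k > 0" and s1: "(\<Sum>k\<in>UNIV. t$k) = 1" and sz: "(\<Sum>k\<in>UNIV. z$k) = 0"
    and hL: "\<forall>w\<in>Sm. L (mu w) = 4 * Lambda c w"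
  shows "\<exists>e>0. \<forall>\<tau>\<in>{-e<..<e}. L (diagc t + \<tau> *\<^sub>R diagc z) = -2 * (\<Sum>k\<in>UNIV. c$k * (t$k + \<tau> * z$k))"
proof -
  define m where "m = Min (range (\<lambda>k. t$k))"
  have mle: "m \<le> t$k" for k unfolding m_def by (rule Min_le) auto
  have "m \<in> range (\<lambda>k. t$k)" unfolding m_def by (rule Min_in) auto
  then have mpos: "m > 0" using pos by auto
  define K where "K = (\<Sum>k\<in>UNIV. \<bar>z$k\<bar>)"
  have K0: "K \<ge> 0" unfolding K_def by (intro sum_nonneg) auto
  have zK: "\<bar>z$k\<bar> \<le> K" for k unfolding K_def by (rule member_le_sum) auto
  define e where "e = m / (K + 1)"
  have epos: "e > 0" using mpos K0 by (simp add: e_def)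
  have eK: "e * K < m"
  proof -
    have "e * K = m * K / (K + 1)" by (simp add: e_def)
    also have "\<dots> < m" using mpos K0 by (simp add: divide_less_eq)
    finally show ?thesis .
  qed
  have main: "L (diagc t + \<tau> *\<^sub>R diagc z) = -2 * (\<Sum>k\<in>UNIV. c$k * (t$k + \<tau> * z$k))"
    if tau: "\<tau> \<in> {-e<..<e}" for \<tau>
  proof -
    have at: "\<bar>\<tau>\<bar> < e" using tau by auto
    have ppos: "t$k + \<tau> * z$k > 0" for k
    proof -
      have "\<bar>\<tau> * z$k\<bar> \<le> e * K" unfolding abs_mult using at zK[of k]
        by (intro mult_mono) auto
      then show ?thesis using eK mle[of k] by linarith
    qed
    define w :: "real^'n" where "w = (\<chi> k. sqrt (t$k + \<tau> * z$k))"
    have w2: "(w$k)^2 = t$k + \<tau> * z$k" for k using ppos[of k] by (simp add: w_def less_imp_le)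
    have sum1: "(\<Sum>k\<in>UNIV. t$k + \<tau> * z$k) = 1"
      by (simp add: sum.distrib s1 sum_distrib_left[symmetric] sz)
    have "norm w = 1"
      unfolding norm_vec_def L2_set_def by (simp add: w2 sum1)
    moreover have "\<forall>k. w$k \<noteq> 0" using ppos by (simp add: w_def) (metis less_irrefl)
    ultimately have wS: "w \<in> Sm" by (simp add: Sm_def)
    have muw: "mu w = diagc t + \<tau> *\<^sub>R diagc z"
      unfolding mu_def by (simp add: w2 diagc_def vec_eq_iff) (simp add: scaleR_conv_of_real)
    have "L (diagc t + \<tau> *\<^sub>R diagc z) = 4 * Lambda c w" using hL wS muw by metis
    also have "\<dots> = -2 * (\<Sum>k\<in>UNIV. c$k * (t$k + \<tau> * z$k))"
      by (simp add: Lambda_def w2)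
    finally show ?thesis .
  qed
  show ?thesis using epos main by blast
qed

lemma lin_repr: "linear f \<Longrightarrow> \<exists>g. \<forall>x. f x = g \<bullet> (x::'a::euclidean_space)"
  by (metis adjoint_clauses(2) real_inner_1_left)

theorem lemma2:
  fixes c :: "real^'n::finite" and L :: "'n cmat \<Rightarrow> real"
    and \<Theta> Z :: "'n cmat"
  assumes "CARD('n) \<ge> 2"
    and "\<exists>U. open U \<and> Pdot \<subseteq> U \<and> smooth_on U L"
    and "\<forall>w\<in>Sm. L (mu w) = 4 * Lambda c w"
    and "\<Theta> \<in> Dm" and "Z \<in> TDm"
  shows "sld_inner \<Theta> (sld_grad L \<Theta>) Z = sld_inner \<Theta> (mu_grad_Lambda c \<Theta>) Z"
proof -
  from assms(4) obtain t where Th: "\<Theta> = diagc t" and pos: "\<forall>k. t$k > 0" and s1: "(\<Sum>k\<in>UNIV. t$k) = 1"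
    unfolding Dm_def by blast
  from assms(5) obtain z where Zz: "Z = diagc z" and sz: "(\<Sum>k\<in>UNIV. z$k) = 0"
    unfolding TDm_def by blast
  from assms(2) obtain U where U: "open U" "Pdot \<subseteq> U" "smooth_on U L" by blast
  then obtain D where D0: "\<forall>x\<in>U. D [] x = L x"
    and Dd: "\<forall>vs. \<forall>x\<in>U. (D vs has_derivative (\<lambda>v. D (v # vs) x)) (at x)"
    unfolding smooth_on_def by blast
  have h0: "hermitian (0::'n cmat)" by (simp add: hermitian_def)
  have t0: "mtrace (0::'n cmat) = 0" by (simp add: mtrace_def)
  obtain e0 where e0: "e0 > 0" "(\<lambda>\<tau>. diagc t + \<tau> *\<^sub>R (0::'n cmat)) ` {-e0<..<e0} \<subseteq> Pdot"
    using line_in_Pdot[OF pos s1 h0 t0] by blast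
  have "diagc t \<in> (\<lambda>\<tau>. diagc t + \<tau> *\<^sub>R (0::'n cmat)) ` {-e0<..<e0}"
    using e0(1) by (auto intro!: image_eqI[where x=0])
  then have ThP: "\<Theta> \<in> Pdot" using e0(2) Th by blast
  then have ThU: "\<Theta> \<in> U" using U(2) by blast
  define dL where "dL = (\<lambda>v. D [v] \<Theta>)"
  have dD: "(D [] has_derivative dL) (at \<Theta>)" using Dd ThU unfolding dL_def by blast
  have dLd: "(L has_derivative dL) (at \<Theta>)"
    by (rule has_derivative_transform_within_open[OF dD U(1) ThU]) (use D0 in auto)
  have bl: "bounded_linear dL" using dLd by (rule has_derivative_bounded_linear)
  have chain: "((\<lambda>\<tau>. L (r \<tau>)) has_real_derivative dL \<Xi>) (at 0)"
    if r0: "r 0 = \<Theta>" and rd: "(r has_vector_derivative \<Xi>) (at 0)" for r :: "real \<Rightarrow> 'n cmat" and \<Xi>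
  proof -
    have r1: "(r has_derivative (\<lambda>\<tau>. \<tau> *\<^sub>R \<Xi>)) (at 0)" using rd by (simp add: has_vector_derivative_def)
    have L1: "(L has_derivative dL) (at (r 0))" using dLd r0 by simp
    have "((L \<circ> r) has_derivative (dL \<circ> (\<lambda>\<tau>. \<tau> *\<^sub>R \<Xi>))) (at 0)"
      by (rule diff_chain_at[OF r1 L1])
    moreover have "(dL \<circ> (\<lambda>\<tau>. \<tau> *\<^sub>R \<Xi>)) = (*) (dL \<Xi>)"
      by (rule ext) (simp add: linear_scale[OF bounded_linear.linear[OF bl]] mult.commute)
    ultimately show ?thesis by (simp add: has_field_derivative_def comp_def)
  qed
  obtain g where g: "\<forall>X. dL X = g \<bullet> X"
    using lin_repr[OF bounded_linear.linear[OF bl]] by blast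
  define h where "h \<equiv> (\<chi> i j. (1/2) *\<^sub>R (g$i$j + cnj (g$j$i))) :: 'n cmat"
  define lam where "lam \<equiv> (\<Sum>i\<in>UNIV. t$i * Re (h$i$i))"
  define G where "G \<equiv> (\<chi> i j. ((t$i + t$j)/2) *\<^sub>R (h$i$j - (if i = j then complex_of_real lam else 0))) :: 'n cmat"
  note GP = G_props[OF pos s1, where g=g, folded h_def, folded lam_def, folded G_def]
  have key: "sld_inner \<Theta> G \<Xi> = dL \<Xi>" if "hermitian \<Xi>" "mtrace \<Xi> = 0" for \<Xi>
    using GP(3)[OF that] g Th by simp
  define P where "P = (\<lambda>G. G \<in> TPdot \<and>
     (\<forall>(r :: real \<Rightarrow> 'n cmat) \<Xi> e. e > 0 \<and> smooth_on {-e<..<e} r \<and> r ` {-e<..<e} \<subseteq> Pdot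
        \<and> r 0 = \<Theta> \<and> (r has_vector_derivative \<Xi>) (at 0)
        \<longrightarrow> ((\<lambda>\<tau>. L (r \<tau>)) has_real_derivative sld_inner \<Theta> G \<Xi>) (at 0)))"
  have PG: "P G"
    unfolding P_def
  proof (intro conjI allI impI)
    show "G \<in> TPdot" using GP(1,2) by (simp add: TPdot_def)
    fix r :: "real \<Rightarrow> 'n cmat" and \<Xi> e
    assume a: "e > 0 \<and> smooth_on {-e<..<e} r \<and> r ` {-e<..<e} \<subseteq> Pdot \<and> r 0 = \<Theta> \<and> (r has_vector_derivative \<Xi>) (at 0)"
    then have tg: "hermitian \<Xi> \<and> mtrace \<Xi> = 0" using curve_tangent by blast
    show "((\<lambda>\<tau>. L (r \<tau>)) has_real_derivative sld_inner \<Theta> G \<Xi>) (at 0)"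
      using chain[of r \<Xi>] a key[of \<Xi>] tg by simp
  qed
  have uniq: "G' = G" if PG': "P G'" for G'
  proof -
    have hG': "hermitian G'" using PG' by (simp add: P_def TPdot_def)
    have trG': "mtrace G' = 0" using PG' by (simp add: P_def TPdot_def)
    have eq: "sld_inner \<Theta> G' X = dL X" if hX: "hermitian X" and tX: "mtrace X = 0" for X
    proof -
      obtain e where e: "e > 0" "(\<lambda>\<tau>. diagc t + \<tau> *\<^sub>R X) ` {-e<..<e} \<subseteq> Pdot"
        using line_in_Pdot[OF pos s1 hX tX] by blast
      let ?r = "\<lambda>\<tau>. diagc t + \<tau> *\<^sub>R X"
      have rd: "(?r has_vector_derivative X) (at 0)"
        by (auto intro!: derivative_eq_intros simp: has_vector_derivative_def)
      have r0: "?r 0 = \<Theta>" using Th by simp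
      have d1: "((\<lambda>\<tau>. L (?r \<tau>)) has_real_derivative sld_inner \<Theta> G' X) (at 0)"
        using PG' e smooth_line[of "{-e<..<e}" "diagc t" X] r0 rd unfolding P_def by blast
      have d2: "((\<lambda>\<tau>. L (?r \<tau>)) has_real_derivative dL X) (at 0)"
        by (rule chain[OF r0 rd])
      show ?thesis using DERIV_unique[OF d1 d2] .
    qed
    have hD: "hermitian (G' - G)" by (rule hermitian_diff[OF hG' GP(1)])
    have tD: "mtrace (G' - G) = 0" using trG' GP(2) by (simp add: mtrace_def sum_subtractf)
    have "sld_inner \<Theta> G' (G' - G) - sld_inner \<Theta> G (G' - G) = 0"
      using eq[OF hD tD] key[OF hD tD] by simp
    then have "sld_inner (diagc t) (G' - G) (G' - G) = 0"
      using sld_inner_diff_left[OF pos hG' GP(1) hD] Th by simp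
    then have "G' - G = 0"
      using weighted_zero[OF pos] unfolding sld_inner_diag[OF pos hD hD] by blast
    then show ?thesis by simp
  qed
  have grad: "sld_grad L \<Theta> = G"
    unfolding sld_grad_def
    using PG uniq unfolding P_def by (intro the_equality) blast+
  have hZ: "hermitian Z" using Zz by (simp add: hermitian_diagc)
  have tZ: "mtrace Z = 0" using Zz sz by (simp add: mtrace_diagc)
  have lhs: "sld_inner \<Theta> (sld_grad L \<Theta>) Z = dL Z" using grad key[OF hZ tZ] by simp
  obtain e where e: "e > 0" and Lline: "\<forall>\<tau>\<in>{-e<..<e}. L (diagc t + \<tau> *\<^sub>R diagc z) = -2 * (\<Sum>k\<in>UNIV. c$k * (t$k + \<tau> * z$k))"
    using L_on_line[OF pos s1 sz assms(3)] by blast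
  let ?r = "\<lambda>\<tau>. diagc t + \<tau> *\<^sub>R Z"
  have rd: "(?r has_vector_derivative Z) (at 0)"
    by (auto intro!: derivative_eq_intros simp: has_vector_derivative_def)
  have r0: "?r 0 = \<Theta>" using Th by simp
  have d1: "((\<lambda>\<tau>. L (?r \<tau>)) has_real_derivative dL Z) (at 0)" by (rule chain[OF r0 rd])
  have d2: "((\<lambda>\<tau>. -2 * (\<Sum>k\<in>UNIV. c$k * (t$k + \<tau> * z$k))) has_real_derivative -2 * (\<Sum>k\<in>UNIV. c$k * z$k)) (at 0)"
    by (auto intro!: derivative_eq_intros simp: mult.commute)
  have d3: "((\<lambda>\<tau>. L (?r \<tau>)) has_real_derivative -2 * (\<Sum>k\<in>UNIV. c$k * z$k)) (at 0)"
  proof (rule has_field_derivative_transform_within_open[OF d2, where S="{-e<..<e}"])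
    show "open {-e<..<e}" by simp
    show "(0::real) \<in> {-e<..<e}" using e by simp
    fix x :: real assume "x \<in> {-e<..<e}"
    then show "-2 * (\<Sum>k\<in>UNIV. c$k * (t$k + x * z$k)) = L (diagc t + x *\<^sub>R Z)"
      using Lline Zz by simp
  qed
  have "dL Z = -2 * (\<Sum>k\<in>UNIV. c$k * z$k)" by (rule DERIV_unique[OF d1 d3])
  then show ?thesis using lhs rhs_calc[OF pos sz, of c] Th Zz by simp
qed

end
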